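(* Let $n\ge q\ge1$ and let $\mathcal{S}$ be a set of two-factor interactions $F_iF_j$ among $n$ factors $F_1,\dots,F_n$. Suppose at least one of the following holds: (i) every factor appears in at most $2^q-1$ interactions of $\mathcal{S}$, and there is no set of $2^q$ factors such that $\mathcal{S}$ contains all $\binom{2^q}{2}$ pairwise interactions among them; (ii) there are at most $2^q-1$ factors each of which appears in at least $2^q-1$ interactions of $\mathcal{S}$. Then there exists a blocked $2^n$ factorial in blocks of size $2^q$ from which all main effects and all interactions in $\mathcal{S}$ are estimable.
   Context: A blocked $2^n$ factorial in blocks of size $2^q$ is specified by a $q\times n$ generator matrix $X$ over $\mathrm{GF}(2)$ of rank $q$: the principal block is the row space of $X$ and the other blocks are its cosets in $\mathrm{GF}(2)^n$. An effect of a set $S$ of factors, with contrast $(-1)^{\sum_{j\in S}x_j}$, is estimable iff its contrast sums to zero over every block. *)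

theory Defs
  imports Main
begin

text \<open>Vectors of GF(2)^n are represented as boolean functions on nat vanishing
  outside {0..<n}; True stands for 1 in GF(2).\<close>

definition gf2_vecs :: "nat \<Rightarrow> (nat \<Rightarrow> bool) set" where
  "gf2_vecs n = {x. \<forall>i\<ge>n. \<not> x i}"

definition gf2_add :: "(nat \<Rightarrow> bool) \<Rightarrow> (nat \<Rightarrow> bool) \<Rightarrow> (nat \<Rightarrow> bool)" where
  "gf2_add x y = (\<lambda>i. x i \<noteq> y i)"

text \<open>A q x n generator matrix X is given by its rows X 0, ..., X (q-1).
  The GF(2)-sum of the rows indexed by T is computed componentwise as a parity.\<close>

definition gf2_rowsum :: "(nat \<Rightarrow> nat \<Rightarrow> bool) \<Rightarrow> nat set \<Rightarrow> (nat \<Rightarrow> bool)" where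
  "gf2_rowsum X T = (\<lambda>j. odd (card {k \<in> T. X k j}))"

definition gf2_rowspace :: "nat \<Rightarrow> (nat \<Rightarrow> nat \<Rightarrow> bool) \<Rightarrow> (nat \<Rightarrow> bool) set" where
  "gf2_rowspace q X = {gf2_rowsum X T | T. T \<subseteq> {..<q}}"

definition gen_matrix :: "nat \<Rightarrow> nat \<Rightarrow> (nat \<Rightarrow> nat \<Rightarrow> bool) \<Rightarrow> bool" where
  "gen_matrix q n X \<longleftrightarrow>
     (\<forall>k<q. X k \<in> gf2_vecs n) \<and>
     (\<forall>T. T \<subseteq> {..<q} \<and> T \<noteq> {} \<longrightarrow> gf2_rowsum X T \<noteq> (\<lambda>_. False))"

definition blocks :: "nat \<Rightarrow> nat \<Rightarrow> (nat \<Rightarrow> nat \<Rightarrow> bool) \<Rightarrow> (nat \<Rightarrow> bool) set set" where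
  "blocks n q X = {(gf2_add a) ` gf2_rowspace q X | a. a \<in> gf2_vecs n}"

definition contrast :: "nat set \<Rightarrow> (nat \<Rightarrow> bool) \<Rightarrow> int" where
  "contrast S x = (-1) ^ card {j \<in> S. x j}"

definition estimable :: "nat \<Rightarrow> nat \<Rightarrow> (nat \<Rightarrow> nat \<Rightarrow> bool) \<Rightarrow> nat set \<Rightarrow> bool" where
  "estimable n q X S \<longleftrightarrow> (\<forall>B \<in> blocks n q X. (\<Sum>x\<in>B. contrast S x) = 0)"

definition deg :: "nat set set \<Rightarrow> nat \<Rightarrow> nat" where
  "deg I i = card {e \<in> I. i \<in> e}"

end

theory Submission
  imports Defs
begin


definition nb :: "('a \<Rightarrow> 'a \<Rightarrow> bool) \<Rightarrow> 'a set \<Rightarrow> 'a \<Rightarrow> 'a set" where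
  "nb E S v = {u\<in>S. E v u}"
definition prop_col :: "('a \<Rightarrow> 'a \<Rightarrow> bool) \<Rightarrow> 'a set \<Rightarrow> ('a \<Rightarrow> nat) \<Rightarrow> bool" where
  "prop_col E V c \<longleftrightarrow> (\<forall>u\<in>V. \<forall>v\<in>V. E u v \<longrightarrow> c u \<noteq> c v)"
definition kcol :: "('a \<Rightarrow> 'a \<Rightarrow> bool) \<Rightarrow> 'a set \<Rightarrow> nat \<Rightarrow> bool" where
  "kcol E V k \<longleftrightarrow> (\<exists>c. (\<forall>v\<in>V. c v < k) \<and> prop_col E V c)"
definition cfree :: "('a \<Rightarrow> 'a \<Rightarrow> bool) \<Rightarrow> 'a set \<Rightarrow> nat \<Rightarrow> bool" where
  "cfree E V k \<longleftrightarrow> \<not>(\<exists>F\<subseteq>V. card F = Suc k \<and> (\<forall>a\<in>F. \<forall>b\<in>F. a \<noteq> b \<longrightarrow> E a b))"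
definition sep :: "('a \<Rightarrow> 'a \<Rightarrow> bool) \<Rightarrow> 'a set \<Rightarrow> 'a set \<Rightarrow> 'a set \<Rightarrow> bool" where
  "sep E W A B \<longleftrightarrow> A \<noteq> {} \<and> B \<noteq> {} \<and> A \<inter> B = {} \<and> A \<union> B = W \<and> (\<forall>a\<in>A. \<forall>b\<in>B. \<not> E a b)"
definition bh :: "nat \<Rightarrow> ('a \<Rightarrow> 'a \<Rightarrow> bool) \<Rightarrow> 'a set \<Rightarrow> bool" where
  "bh k E V \<longleftrightarrow> finite V \<and> (\<forall>u v. E u v \<longrightarrow> E v u) \<and> (\<forall>u. \<not> E u u) \<and>
     (\<forall>v\<in>V. card (nb E V v) \<le> k) \<and> cfree E V k"

lemma list_col:
  assumes "finite V" "\<forall>u v. E u v \<longrightarrow> E v u" "\<forall>u. \<not> E u u"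
    "\<forall>S\<subseteq>V. S \<noteq> {} \<longrightarrow> (\<exists>w\<in>S. card (nb E S w) < card (L w))"
  shows "\<exists>c. (\<forall>v\<in>V. c v \<in> L v) \<and> prop_col E V c"
  using assms
proof (induction "card V" arbitrary: V rule: less_induct)
  case less
  show ?case
  proof (cases "V = {}")
    case True then show ?thesis by (simp add: prop_col_def)
  next
    case False
    then obtain w where w: "w \<in> V" "card (nb E V w) < card (L w)" using less.prems(4) by blast
    have lt: "card (V - {w}) < card V" using w(1) less.prems(1) by (meson card_Diff1_less)
    have h: "\<forall>S\<subseteq>V - {w}. S \<noteq> {} \<longrightarrow> (\<exists>w\<in>S. card (nb E S w) < card (L w))"
      using less.prems(4) by blast
    obtain c where c: "\<forall>v\<in>V - {w}. c v \<in> L v" "prop_col E (V - {w}) c"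
      using less.hyps[OF lt _ less.prems(2,3) h] less.prems(1) by blast
    have fin: "finite (nb E V w)" using less.prems(1) by (simp add: nb_def)
    have cl: "card (c ` nb E V w) < card (L w)" using card_image_le[OF fin, of c] w(2) by linarith
    have "\<not> L w \<subseteq> c ` nb E V w"
    proof
      assume "L w \<subseteq> c ` nb E V w"
      then have "card (L w) \<le> card (c ` nb E V w)" using fin by (simp add: card_mono)
      then show False using cl by linarith
    qed
    then obtain g where g: "g \<in> L w" "g \<notin> c ` nb E V w" by blast
    define c' where "c' = c(w := g)"
    have "\<forall>v\<in>V. c' v \<in> L v" using c(1) g(1) by (auto simp: c'_def)
    moreover have "prop_col E V c'"
      unfolding prop_col_def
    proof (intro ballI impI)
      fix u v assume uv: "u \<in> V" "v \<in> V" "E u v"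
      show "c' u \<noteq> c' v"
      proof (cases "u = w")
        case True
        then have "v \<noteq> w" using uv less.prems(3) by blast
        then show ?thesis using True uv g(2) by (auto simp: c'_def nb_def)
      next
        case False
        show ?thesis
        proof (cases "v = w")
          case True
          then have "E w u" using uv less.prems(2) by blast
          then show ?thesis using True False uv g(2) by (auto simp: c'_def nb_def)
        next
          case False2: False
          then show ?thesis using False uv c(2) by (auto simp: c'_def prop_col_def)
        qed
      qed
    qed
    ultimately show ?thesis by blast
  qed
qed

definition sw :: "nat \<Rightarrow> nat \<Rightarrow> nat \<Rightarrow> nat" where
  "sw a b = (\<lambda>z. if z = a then b else if z = b then a else z)"

lemma sw_inj: "inj (sw a b)" by (auto simp: inj_def sw_def)
lemma sw_lt: "a < k \<Longrightarrow> b < k \<Longrightarrow> z < k \<Longrightarrow> sw a b z < k" by (auto simp: sw_def)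

lemma perm2:
  fixes x1 y1 x2 y2 k :: nat
  assumes "x1 < k" "y1 < k" "x2 < k" "y2 < k" "(x1 = y1) = (x2 = y2)"
  shows "\<exists>\<pi>. inj \<pi> \<and> \<pi> x2 = x1 \<and> \<pi> y2 = y1 \<and> (\<forall>z<k. \<pi> z < k)"
proof -
  define p1 where "p1 = sw x2 x1"
  define p where "p = sw (p1 y2) y1 \<circ> p1"
  have "inj p" unfolding p_def p1_def by (meson inj_compose sw_inj)
  moreover have "p x2 = x1" "p y2 = y1" using assms(5) by (auto simp: p_def p1_def sw_def)
  moreover have "\<forall>z<k. p z < k" using assms(1-4) by (simp add: p_def p1_def sw_lt)
  ultimately show ?thesis by blast
qed

lemma glue:
  assumes "W1 \<union> W2 = V" "\<forall>x\<in>W1-W2. \<forall>y\<in>W2-W1. \<not> E x y \<and> \<not> E y x"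
    "\<forall>v\<in>W1. c1 v < k" "prop_col E W1 c1" "\<forall>v\<in>W2. c2 v < k" "prop_col E W2 c2"
    "inj \<pi>" "\<forall>z<k. \<pi> z < k" "\<forall>x\<in>W1\<inter>W2. \<pi> (c2 x) = c1 x"
  shows "kcol E V k"
proof -
  define c where "c = (\<lambda>x. if x \<in> W1 then c1 x else \<pi> (c2 x))"
  have "\<forall>v\<in>V. c v < k" using assms(1,3,5,8) by (auto simp: c_def)
  moreover have "prop_col E V c"
    unfolding prop_col_def
  proof (intro ballI impI)
    fix u v assume uv: "u \<in> V" "v \<in> V" "E u v"
    have injd: "\<And>a b. a \<noteq> b \<Longrightarrow> \<pi> a \<noteq> \<pi> b" using assms(7) by (meson injD)
    show "c u \<noteq> c v"
    proof (cases "u \<in> W1")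
      case u1: True
      show ?thesis
      proof (cases "v \<in> W1")
        case True then show ?thesis using u1 uv assms(4) by (auto simp: c_def prop_col_def)
      next
        case v1: False
        then have v2: "v \<in> W2" using uv assms(1) by blast
        show ?thesis
        proof (cases "u \<in> W2")
          case True
          then have "c2 u \<noteq> c2 v" using v2 uv assms(6) by (auto simp: prop_col_def)
          moreover have "\<pi> (c2 u) = c1 u" using assms(9) u1 True by blast
          ultimately show ?thesis using u1 v1 injd unfolding c_def by (metis (full_types))
        next
          case False then show ?thesis using u1 v1 v2 uv assms(2) by blast
        qed
      qed
    next
      case u1: False
      then have u2: "u \<in> W2" using uv assms(1) by blast
      show ?thesis
      proof (cases "v \<in> W1")
        case v1: True
        show ?thesis
        proof (cases "v \<in> W2")
          case True
          then have "c2 u \<noteq> c2 v" using u2 uv assms(6) by (auto simp: prop_col_def)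
          moreover have "\<pi> (c2 v) = c1 v" using assms(9) v1 True by blast
          ultimately show ?thesis using u1 v1 injd unfolding c_def by (metis (full_types))
        next
          case False then show ?thesis using u1 v1 u2 uv assms(2) by blast
        qed
      next
        case v1: False
        then have "v \<in> W2" using uv assms(1) by blast
        then have "c2 u \<noteq> c2 v" using u2 uv assms(6) by (auto simp: prop_col_def)
        then show ?thesis using u1 v1 injd by (auto simp: c_def)
      qed
    qed
  qed
  ultimately show ?thesis unfolding kcol_def by blast
qed

lemma bh_sub: assumes "bh k E V" "W \<subseteq> V" shows "bh k E W"
proof -
  have fin: "finite V" using assms(1) by (simp add: bh_def)
  have "\<forall>v\<in>W. card (nb E W v) \<le> k"
  proof
    fix v assume "v \<in> W"
    have "nb E W v \<subseteq> nb E V v" using assms(2) by (auto simp: nb_def)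
    moreover have "finite (nb E V v)" using fin by (simp add: nb_def)
    ultimately have "card (nb E W v) \<le> card (nb E V v)" by (simp add: card_mono)
    moreover have "card (nb E V v) \<le> k" using assms(1) \<open>v \<in> W\<close> assms(2) unfolding bh_def by blast
    ultimately show "card (nb E W v) \<le> k" by linarith
  qed
  moreover have "cfree E W k"
  proof -
    have "cfree E V k" using assms(1) by (simp add: bh_def)
    then show ?thesis unfolding cfree_def using assms(2) by (meson subset_trans)
  qed
  moreover have "finite W" using fin assms(2) by (rule finite_subset[rotated])
  ultimately show ?thesis using assms(1) unfolding bh_def by simp
qed

lemma prop_col_mono: "\<forall>u v. E u v \<longrightarrow> E' u v \<Longrightarrow> prop_col E' V c \<Longrightarrow> prop_col E V c"
  unfolding prop_col_def by blast

lemma sep_sym: "\<forall>u v. E u v \<longrightarrow> E v u \<Longrightarrow> sep E W A B \<Longrightarrow> sep E W B A"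
  unfolding sep_def by (metis Un_commute inf_commute)

lemma psub_card: "finite V \<Longrightarrow> W \<subseteq> V \<Longrightarrow> y \<in> V \<Longrightarrow> y \<notin> W \<Longrightarrow> card W < card V"
proof -
  assume a: "finite V" "W \<subseteq> V" "y \<in> V" "y \<notin> W"
  then have "W \<subset> V" by blast
  then show ?thesis by (rule psubset_card_mono[OF a(1)])
qed

lemma case_low:
  fixes V :: "'a set"
  assumes bh: "bh k E V" and IH: "\<forall>(W::'a set) E'. card W < card V \<longrightarrow> bh k E' W \<longrightarrow> kcol E' W k"
    and v: "v \<in> V" "card (nb E V v) < k"
  shows "kcol E V k"
proof -
  have fin: "finite V" and sy: "\<forall>u v. E u v \<longrightarrow> E v u" and ir: "\<forall>u. \<not> E u u"
    using bh by (auto simp: bh_def)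
  have "card (V - {v}) < card V" using v fin by (meson card_Diff1_less)
  moreover have "bh k E (V - {v})" using bh_sub[OF bh] by blast
  ultimately have "kcol E (V - {v}) k" by (intro IH[rule_format])
  then obtain c where c: "\<forall>u\<in>V-{v}. c u < k" "prop_col E (V - {v}) c"
    unfolding kcol_def by blast
  have f: "finite (nb E V v)" using fin by (simp add: nb_def)
  have cl: "card (c ` nb E V v) < card {..<k}" using card_image_le[OF f, of c] v(2) by simp
  have "\<not> {..<k} \<subseteq> c ` nb E V v"
  proof
    assume "{..<k} \<subseteq> c ` nb E V v"
    then have "card {..<k} \<le> card (c ` nb E V v)" using f by (intro card_mono) auto
    then show False using cl by linarith
  qed
  then obtain g where g: "g < k" "g \<notin> c ` nb E V v" by blast
  define c' where "c' = c(v := g)"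
  have "\<forall>u\<in>V. c' u < k" using c(1) g(1) by (auto simp: c'_def)
  moreover have "prop_col E V c'"
    unfolding prop_col_def
  proof (intro ballI impI)
    fix x y assume xy: "x \<in> V" "y \<in> V" "E x y"
    show "c' x \<noteq> c' y"
    proof (cases "x = v")
      case True
      then have "y \<noteq> v" using xy ir by blast
      then show ?thesis using True xy g(2) by (auto simp: c'_def nb_def)
    next
      case False
      show ?thesis
      proof (cases "y = v")
        case True
        then have "E v x" using xy sy by blast
        then show ?thesis using True False xy g(2) by (auto simp: c'_def nb_def)
      next
        case False2: False
        then show ?thesis using False xy c(2) by (auto simp: c'_def prop_col_def)
      qed
    qed
  qed
  ultimately show ?thesis unfolding kcol_def by blast
qed

lemma case_cut1:
  fixes V :: "'a set"
  assumes bh: "bh k E V" and IH: "\<forall>(W::'a set) E'. card W < card V \<longrightarrow> bh k E' W \<longrightarrow> kcol E' W k"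
    and v: "v \<in> V" and s: "sep E (V - {v}) A B"
  shows "kcol E V k"
proof -
  have fin: "finite V" and sy: "\<forall>u v. E u v \<longrightarrow> E v u"
    using bh by (auto simp: bh_def)
  from s have A: "A \<noteq> {}" "B \<noteq> {}" "A \<inter> B = {}" "A \<union> B = V - {v}" "\<forall>a\<in>A. \<forall>b\<in>B. \<not> E a b"
    by (auto simp: sep_def)
  obtain y1 where y1: "y1 \<in> B" using A(2) by auto
  obtain y2 where y2: "y2 \<in> A" using A(1) by blast
  have s1: "insert v A \<subseteq> V" "insert v B \<subseteq> V" using A v by auto
  have "card (insert v A) < card V" using psub_card[OF fin s1(1), of y1] y1 A by auto
  then have "kcol E (insert v A) k" using bh_sub[OF bh s1(1)] by (intro IH[rule_format])
  then obtain c1 where c1: "\<forall>u\<in>insert v A. c1 u < k" "prop_col E (insert v A) c1"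
    unfolding kcol_def by blast
  have "card (insert v B) < card V" using psub_card[OF fin s1(2), of y2] y2 A by auto
  then have "kcol E (insert v B) k" using bh_sub[OF bh s1(2)] by (intro IH[rule_format])
  then obtain c2 where c2: "\<forall>u\<in>insert v B. c2 u < k" "prop_col E (insert v B) c2"
    unfolding kcol_def by blast
  obtain \<pi> where p: "inj \<pi>" "\<pi> (c2 v) = c1 v" "\<forall>z<k. \<pi> z < k"
    using perm2[of "c1 v" k "c1 v" "c2 v" "c2 v"] c1 c2 by auto
  show ?thesis
  proof (rule glue[OF _ _ c1(1) c1(2) c2(1) c2(2) p(1) p(3)])
    show "insert v A \<union> insert v B = V" using A v by auto
    show "\<forall>x\<in>insert v A - insert v B. \<forall>y\<in>insert v B - insert v A. \<not> E x y \<and> \<not> E y x"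
    proof (intro ballI)
      fix x y assume "x \<in> insert v A - insert v B" "y \<in> insert v B - insert v A"
      then have "x \<in> A" "y \<in> B" by auto
      then show "\<not> E x y \<and> \<not> E y x" using A(5) sy by blast
    qed
    have "insert v A \<inter> insert v B = {v}" using A by auto
    then show "\<forall>x\<in>insert v A \<inter> insert v B. \<pi> (c2 x) = c1 x" using p by (metis singletonD)
  qed
qed

lemma half:
  fixes V :: "'a set"
  assumes bh: "bh k E V" and IH: "\<forall>(W::'a set) E'. card W < card V \<longrightarrow> bh k E' W \<longrightarrow> kcol E' W k"
    and k3: "3 \<le> k" and ab: "a \<in> V" "b \<in> V" "a \<noteq> b"
    and s: "sep E (V - {a,b}) A B" and nab: "\<not> E a b"
    and ncf: "\<not> cfree (\<lambda>u v. E u v \<or> (u = a \<and> v = b) \<or> (u = b \<and> v = a)) (A \<union> {a,b}) k"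
  shows "\<exists>c1 c2. (\<forall>v\<in>A\<union>{a,b}. c1 v < k) \<and> prop_col E (A\<union>{a,b}) c1 \<and>
            (\<forall>v\<in>B\<union>{a,b}. c2 v < k) \<and> prop_col E (B\<union>{a,b}) c2 \<and> c1 a = c1 b \<and> c2 a = c2 b"
proof -
  have fin: "finite V" and sy: "\<forall>u v. E u v \<longrightarrow> E v u" and ir: "\<forall>u. \<not> E u u"
    and dg: "\<forall>v\<in>V. card (nb E V v) \<le> k" and cf: "cfree E V k"
    using bh by (auto simp: bh_def)
  from s have A: "A \<noteq> {}" "B \<noteq> {}" "A \<inter> B = {}" "A \<union> B = V - {a,b}" "\<forall>x\<in>A. \<forall>y\<in>B. \<not> E x y"
    by (auto simp: sep_def)
  have AV: "A \<subseteq> V" "B \<subseteq> V" using A(4) by auto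
  have aB: "a \<notin> B" "b \<notin> B" "a \<notin> A" "b \<notin> A" using A(4) by auto
  from ncf obtain F where F: "F \<subseteq> A \<union> {a,b}" "card F = Suc k"
    "\<forall>x\<in>F. \<forall>y\<in>F. x \<noteq> y \<longrightarrow> (E x y \<or> (x = a \<and> y = b) \<or> (x = b \<and> y = a))"
    unfolding cfree_def by blast
  have abF: "a \<in> F \<and> b \<in> F"
  proof (rule ccontr)
    assume nn: "\<not> (a \<in> F \<and> b \<in> F)"
    have "\<forall>x\<in>F. \<forall>y\<in>F. x \<noteq> y \<longrightarrow> E x y"
    proof (intro ballI impI)
      fix x y assume "x \<in> F" "y \<in> F" "x \<noteq> y"
      then show "E x y" using F(3)[rule_format, of x y] nn by auto
    qed
    moreover have "F \<subseteq> V" using F(1) AV ab by blast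
    ultimately show False using cf F(2) unfolding cfree_def by blast
  qed
  define K where "K = F - {a,b}"
  have finF: "finite F" using F(2) card_ge_0_finite by force
  have cK: "card K = k - 1"
  proof -
    have "card K = card F - card {a,b}" unfolding K_def using abF finF
      by (intro card_Diff_subset) auto
    then show ?thesis using F(2) ab(3) by simp
  qed
  have KA: "K \<subseteq> A" using F(1) unfolding K_def by blast
  have finK: "finite K" using finF K_def by simp
  have Kab: "\<forall>u\<in>K. E a u \<and> E b u"
  proof
    fix u assume u: "u \<in> K"
    then have "u \<in> F" "u \<noteq> a" "u \<noteq> b" unfolding K_def by auto
    then show "E a u \<and> E b u" using F(3)[rule_format, of a u] F(3)[rule_format, of b u] abF ab(3) by auto
  qed
  have KK: "\<forall>u\<in>K. \<forall>w\<in>K. u \<noteq> w \<longrightarrow> E u w"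
  proof (intro ballI impI)
    fix u w assume "u \<in> K" "w \<in> K" "u \<noteq> w"
    then have "u \<in> F" "w \<in> F" "u \<noteq> a" "u \<noteq> b" unfolding K_def by auto
    then show "E u w" using F(3)[rule_format, of u w] \<open>u \<noteq> w\<close> by auto
  qed
  obtain y1 where y1: "y1 \<in> B" using A(2) by auto
  have W1V: "A \<union> {a,b} \<subseteq> V" using AV ab by blast
  have "card (A \<union> {a,b}) < card V" using psub_card[OF fin W1V, of y1] y1 AV A(3) aB by auto
  then have "kcol E (A \<union> {a,b}) k" using bh_sub[OF bh W1V] by (intro IH[rule_format])
  then obtain c1 where c1: "\<forall>u\<in>A \<union> {a,b}. c1 u < k" "prop_col E (A \<union> {a,b}) c1"
    unfolding kcol_def by blast
  have injK: "inj_on c1 K"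
  proof (rule inj_onI)
    fix u w assume "u \<in> K" "w \<in> K" "c1 u = c1 w"
    then show "u = w" using KK KA c1(2) unfolding prop_col_def by blast
  qed
  have cK1: "card (c1 ` K) = k - 1" using card_image[OF injK] cK by simp
  have sub: "c1 ` K \<subseteq> {..<k}" using c1(1) KA by auto
  have cR: "card ({..<k} - c1 ` K) = 1"
    using card_Diff_subset[OF finite_imageI[OF finK] sub] cK1 k3 by simp
  have aR: "c1 a \<in> {..<k} - c1 ` K"
  proof -
    have "c1 a \<notin> c1 ` K"
    proof
      assume "c1 a \<in> c1 ` K"
      then obtain u where "u \<in> K" "c1 a = c1 u" by blast
      then show False using Kab KA c1(2) unfolding prop_col_def by blast
    qed
    then show ?thesis using c1(1) by auto
  qed
  have bR: "c1 b \<in> {..<k} - c1 ` K"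
  proof -
    have "c1 b \<notin> c1 ` K"
    proof
      assume "c1 b \<in> c1 ` K"
      then obtain u where "u \<in> K" "c1 b = c1 u" by blast
      then show False using Kab KA c1(2) unfolding prop_col_def by blast
    qed
    then show ?thesis using c1(1) by auto
  qed
  have c1ab: "c1 a = c1 b" using cR aR bR by (metis card_1_singletonE singletonD)
  obtain y2 where y2: "y2 \<in> A" using A(1) by blast
  have "card B < card V" using psub_card[OF fin AV(2), of y2] y2 AV A(3) by auto
  then have "kcol E B k" using bh_sub[OF bh AV(2)] by (intro IH[rule_format])
  then obtain c where c: "\<forall>u\<in>B. c u < k" "prop_col E B c"
    unfolding kcol_def by blast
  have finB: "finite B" using fin AV(2) by (rule finite_subset[rotated])
  have nbB: "card (nb E B x) \<le> 1" if x: "x \<in> {a,b}" for x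
  proof -
    have "K \<union> nb E B x \<subseteq> nb E V x" using Kab KA AV x unfolding nb_def by auto
    then have "card (K \<union> nb E B x) \<le> card (nb E V x)"
      using fin by (intro card_mono) (auto simp: nb_def)
    moreover have "card (K \<union> nb E B x) = card K + card (nb E B x)"
      using finK finB KA A(3) by (intro card_Un_disjoint) (auto simp: nb_def)
    moreover have "card (nb E V x) \<le> k" using dg x ab by blast
    ultimately show ?thesis using cK k3 by linarith
  qed
  define X where "X = c ` (nb E B a \<union> nb E B b)"
  have "card X \<le> 2"
  proof -
    have "card X \<le> card (nb E B a \<union> nb E B b)" unfolding X_def
      using finB by (intro card_image_le) (auto simp: nb_def)
    also have "\<dots> \<le> card (nb E B a) + card (nb E B b)" by (rule card_Un_le)
    finally show ?thesis using nbB[of a] nbB[of b] by simp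
  qed
  have "\<not> {..<k} \<subseteq> X"
  proof
    assume "{..<k} \<subseteq> X"
    then have "card {..<k} \<le> card X" using finB unfolding X_def by (intro card_mono) (auto simp: nb_def)
    then show False using \<open>card X \<le> 2\<close> k3 by simp
  qed
  then obtain g where g: "g < k" "g \<notin> X" by blast
  define c2 where "c2 = c(a := g, b := g)"
  have "\<forall>v\<in>B\<union>{a,b}. c2 v < k" using c(1) g(1) by (auto simp: c2_def)
  moreover have "prop_col E (B\<union>{a,b}) c2"
    unfolding prop_col_def
  proof (intro ballI impI)
    fix u v assume uv: "u \<in> B \<union> {a,b}" "v \<in> B \<union> {a,b}" "E u v"
    show "c2 u \<noteq> c2 v"
    proof (cases "u \<in> B")
      case uB: True
      show ?thesis
      proof (cases "v \<in> B")
        case True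
        then show ?thesis using uB uv c(2) aB unfolding prop_col_def c2_def by auto
      next
        case False
        then have v: "v = a \<or> v = b" using uv by blast
        have "E v u" using uv sy by blast
        then have "u \<in> nb E B a \<union> nb E B b" using v uB unfolding nb_def by blast
        then have "c u \<in> X" unfolding X_def by blast
        then show ?thesis using g(2) uB aB v unfolding c2_def by auto
      qed
    next
      case uB: False
      then have u: "u = a \<or> u = b" using uv by blast
      show ?thesis
      proof (cases "v \<in> B")
        case True
        then have "v \<in> nb E B a \<union> nb E B b" using u uv unfolding nb_def by blast
        then have "c v \<in> X" unfolding X_def by blast
        then show ?thesis using g(2) True aB u unfolding c2_def by auto
      next
        case False
        then have v: "v = a \<or> v = b" using uv by blast
        have "E b a \<Longrightarrow> False" using nab sy by blast
        then show ?thesis using u v uv nab ir by blast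
      qed
    qed
  qed
  moreover have "c2 a = c2 b" by (simp add: c2_def)
  ultimately show ?thesis using c1 c1ab by blast
qed

lemma nb_exists:
  fixes V :: "'a set"
  assumes bh: "bh k E V" and ab: "a \<in> V" "b \<in> V" "a \<noteq> b"
    and s: "sep E (V - {a,b}) A B" and nocut: "\<forall>v\<in>V. \<forall>A B. \<not> sep E (V - {v}) A B"
  shows "\<exists>y\<in>B. E a y"
proof (rule ccontr)
  assume nn: "\<not> (\<exists>y\<in>B. E a y)"
  from s have A: "A \<noteq> {}" "B \<noteq> {}" "A \<inter> B = {}" "A \<union> B = V - {a,b}" "\<forall>x\<in>A. \<forall>y\<in>B. \<not> E x y"
    by (auto simp: sep_def)
  have "sep E (V - {b}) (insert a A) B"
    unfolding sep_def
  proof (intro conjI)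
    show "insert a A \<noteq> {}" by simp
    show "B \<noteq> {}" by (rule A(2))
    show "insert a A \<inter> B = {}" using A(3) A(4) by auto
    show "insert a A \<union> B = V - {b}" using A(4) ab by auto
    show "\<forall>x\<in>insert a A. \<forall>y\<in>B. \<not> E x y" using A(5) nn by auto
  qed
  then show False using nocut ab(2) by blast
qed

lemma side_bh:
  fixes V :: "'a set"
  assumes bh: "bh k E V" and ab: "a \<in> V" "b \<in> V" "a \<noteq> b"
    and s: "sep E (V - {a,b}) A B" and nab: "\<not> E a b"
    and na: "\<exists>y\<in>B. E a y" and nb: "\<exists>y\<in>B. E b y"
    and cf: "cfree (\<lambda>u v. E u v \<or> (u = a \<and> v = b) \<or> (u = b \<and> v = a)) (A \<union> {a,b}) k"
  shows "bh k (\<lambda>u v. E u v \<or> (u = a \<and> v = b) \<or> (u = b \<and> v = a)) (A \<union> {a,b})"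
proof -
  define E' where "E' = (\<lambda>u v. E u v \<or> (u = a \<and> v = b) \<or> (u = b \<and> v = a))"
  have fin: "finite V" and sy: "\<forall>u v. E u v \<longrightarrow> E v u" and ir: "\<forall>u. \<not> E u u"
    and dg: "\<forall>v\<in>V. card (nb E V v) \<le> k"
    using bh by (auto simp: bh_def)
  from s have A: "A \<inter> B = {}" "A \<union> B = V - {a,b}"
    by (auto simp: sep_def)
  have W: "A \<union> {a,b} \<subseteq> V" using A(2) ab by blast
  have finW: "finite (A \<union> {a,b})" using fin W by (rule finite_subset[rotated])
  have aux: "card (insert z (nb E (A \<union> {a,b}) x)) \<le> k"
    if x: "x \<in> V" and y: "y \<in> B" "E x y" for x y z
  proof -
    have yV: "y \<in> V" "y \<notin> A \<union> {a,b}" using y A by auto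
    have "nb E (A \<union> {a,b}) x \<subseteq> nb E V x - {y}" using W yV unfolding nb_def by blast
    then have "card (nb E (A \<union> {a,b}) x) \<le> card (nb E V x - {y})"
      using fin by (intro card_mono) (auto simp: nb_def)
    also have "\<dots> = card (nb E V x) - 1" using y yV by (simp add: nb_def)
    finally have c1: "card (nb E (A \<union> {a,b}) x) \<le> card (nb E V x) - 1" .
    have c2: "card (nb E V x) \<le> k" using dg x by blast
    have "y \<in> nb E V x" using yV y by (simp add: nb_def)
    then have c3: "card (nb E V x) \<ge> 1" using fin
      by (metis One_nat_def Suc_leI card_gt_0_iff empty_iff finite_subset mem_Collect_eq nb_def subsetI)
    have finN: "finite (nb E (A \<union> {a,b}) x)" using finW by (simp add: nb_def)
    have "card (insert z (nb E (A \<union> {a,b}) x)) \<le> card (nb E (A \<union> {a,b}) x) + 1"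
      using finN by (simp add: card_insert_if)
    then show ?thesis using c1 c2 c3 by linarith
  qed
  have "\<forall>v\<in>A \<union> {a,b}. card (nb E' (A \<union> {a,b}) v) \<le> k"
  proof
    fix v assume v: "v \<in> A \<union> {a,b}"
    show "card (nb E' (A \<union> {a,b}) v) \<le> k"
    proof (cases "v = a")
      case True
      then have "nb E' (A \<union> {a,b}) v = insert b (nb E (A \<union> {a,b}) a)"
        using ab(3) unfolding nb_def E'_def by auto
      then show ?thesis using aux[OF ab(1)] na by auto
    next
      case va: False
      show ?thesis
      proof (cases "v = b")
        case True
        then have "nb E' (A \<union> {a,b}) v = insert a (nb E (A \<union> {a,b}) b)"
          using ab(3) unfolding nb_def E'_def by auto
        then show ?thesis using aux[OF ab(2)] nb by auto
      next
        case False
        then have "nb E' (A \<union> {a,b}) v = nb E (A \<union> {a,b}) v"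
          using va unfolding nb_def E'_def by auto
        moreover have "card (nb E (A \<union> {a,b}) v) \<le> card (nb E V v)"
          using W fin by (intro card_mono) (auto simp: nb_def)
        moreover have "card (nb E V v) \<le> k" using dg v W by blast
        ultimately show ?thesis by simp
      qed
    qed
  qed
  moreover have "\<forall>u v. E' u v \<longrightarrow> E' v u" using sy unfolding E'_def by blast
  moreover have "\<forall>u. \<not> E' u u" using ir ab(3) unfolding E'_def by blast
  ultimately show ?thesis using finW cf unfolding bh_def E'_def by blast
qed

lemma case_cut2:
  fixes V :: "'a set"
  assumes bh: "bh k E V" and IH: "\<forall>(W::'a set) E'. card W < card V \<longrightarrow> bh k E' W \<longrightarrow> kcol E' W k"
    and k3: "3 \<le> k" and ab: "a \<in> V" "b \<in> V" "a \<noteq> b"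
    and s: "sep E (V - {a,b}) A B" and nocut: "\<forall>v\<in>V. \<forall>A B. \<not> sep E (V - {v}) A B"
  shows "kcol E V k"
proof -
  have fin: "finite V" and sy: "\<forall>u v. E u v \<longrightarrow> E v u"
    using bh by (auto simp: bh_def)
  have s': "sep E (V - {a,b}) B A" using sep_sym[OF sy s] .
  have s2: "sep E (V - {b,a}) A B" "sep E (V - {b,a}) B A" using s s' by (simp_all add: insert_commute)
  from s have A: "A \<noteq> {}" "B \<noteq> {}" "A \<inter> B = {}" "A \<union> B = V - {a,b}" "\<forall>x\<in>A. \<forall>y\<in>B. \<not> E x y"
    by (auto simp: sep_def)
  have aB: "a \<notin> B" "b \<notin> B" "a \<notin> A" "b \<notin> A" using A(4) by auto
  have naB: "\<exists>y\<in>B. E a y" by (rule nb_exists[OF bh ab s nocut])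
  have naA: "\<exists>y\<in>A. E a y" by (rule nb_exists[OF bh ab s' nocut])
  have nbB: "\<exists>y\<in>B. E b y" using nb_exists[OF bh ab(2,1) _ s2(1) nocut] ab(3) by blast
  have nbA: "\<exists>y\<in>A. E b y" using nb_exists[OF bh ab(2,1) _ s2(2) nocut] ab(3) by blast
  obtain y1 where y1: "y1 \<in> B" using A(2) by auto
  obtain y2 where y2: "y2 \<in> A" using A(1) by auto
  have W1V: "A \<union> {a,b} \<subseteq> V" and W2V: "B \<union> {a,b} \<subseteq> V" using A(4) ab by auto
  have y1V: "y1 \<in> V" "y2 \<in> V" using y1 y2 A(4) by auto
  have lt1: "card (A \<union> {a,b}) < card V" using psub_card[OF fin W1V, of y1] y1 y1V A(3) aB by auto
  have lt2: "card (B \<union> {a,b}) < card V" using psub_card[OF fin W2V, of y2] y2 y1V A(3) aB by auto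
  have "\<exists>c1 c2. (\<forall>v\<in>A\<union>{a,b}. c1 v < k) \<and> prop_col E (A\<union>{a,b}) c1 \<and>
            (\<forall>v\<in>B\<union>{a,b}. c2 v < k) \<and> prop_col E (B\<union>{a,b}) c2 \<and> (c1 a = c1 b \<longleftrightarrow> c2 a = c2 b)"
  proof (cases "E a b")
    case True
    have "kcol E (A \<union> {a,b}) k" using lt1 bh_sub[OF bh W1V] by (intro IH[rule_format])
    then obtain c1 where c1: "\<forall>u\<in>A \<union> {a,b}. c1 u < k" "prop_col E (A \<union> {a,b}) c1"
      unfolding kcol_def by blast
    have "kcol E (B \<union> {a,b}) k" using lt2 bh_sub[OF bh W2V] by (intro IH[rule_format])
    then obtain c2 where c2: "\<forall>u\<in>B \<union> {a,b}. c2 u < k" "prop_col E (B \<union> {a,b}) c2"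
      unfolding kcol_def by blast
    have "c1 a \<noteq> c1 b" using c1(2) True unfolding prop_col_def by blast
    moreover have "c2 a \<noteq> c2 b" using c2(2) True unfolding prop_col_def by blast
    ultimately show ?thesis using c1 c2 by blast
  next
    case nab: False
    define E' where "E' = (\<lambda>u v. E u v \<or> (u = a \<and> v = b) \<or> (u = b \<and> v = a))"
    have EE': "\<forall>u v. E u v \<longrightarrow> E' u v" unfolding E'_def by blast
    show ?thesis
    proof (cases "cfree E' (A \<union> {a,b}) k \<and> cfree E' (B \<union> {a,b}) k")
      case True
      have b1: "bh k E' (A \<union> {a,b})" unfolding E'_def
        by (rule side_bh[OF bh ab s nab naB nbB]) (use True in \<open>simp add: E'_def\<close>)
      have b2: "bh k E' (B \<union> {a,b})" unfolding E'_def
        by (rule side_bh[OF bh ab s' nab naA nbA]) (use True in \<open>simp add: E'_def\<close>)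
      have "kcol E' (A \<union> {a,b}) k" using lt1 b1 by (intro IH[rule_format])
      then obtain c1 where c1: "\<forall>u\<in>A \<union> {a,b}. c1 u < k" "prop_col E' (A \<union> {a,b}) c1"
        unfolding kcol_def by blast
      have "kcol E' (B \<union> {a,b}) k" using lt2 b2 by (intro IH[rule_format])
      then obtain c2 where c2: "\<forall>u\<in>B \<union> {a,b}. c2 u < k" "prop_col E' (B \<union> {a,b}) c2"
        unfolding kcol_def by blast
      have "c1 a \<noteq> c1 b" using c1(2) unfolding prop_col_def E'_def by blast
      moreover have "c2 a \<noteq> c2 b" using c2(2) unfolding prop_col_def E'_def by blast
      moreover have "prop_col E (A \<union> {a,b}) c1" by (rule prop_col_mono[OF EE' c1(2)])
      moreover have "prop_col E (B \<union> {a,b}) c2" by (rule prop_col_mono[OF EE' c2(2)])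
      ultimately show ?thesis using c1(1) c2(1) by blast
    next
      case False
      then have "\<not> cfree E' (A \<union> {a,b}) k \<or> \<not> cfree E' (B \<union> {a,b}) k" by blast
      then show ?thesis
      proof
        assume "\<not> cfree E' (A \<union> {a,b}) k"
        then obtain c1 c2 where "(\<forall>v\<in>A\<union>{a,b}. c1 v < k) \<and> prop_col E (A\<union>{a,b}) c1 \<and>
            (\<forall>v\<in>B\<union>{a,b}. c2 v < k) \<and> prop_col E (B\<union>{a,b}) c2 \<and> c1 a = c1 b \<and> c2 a = c2 b"
          using half[OF bh IH k3 ab s nab] unfolding E'_def by blast
        then show ?thesis by blast
      next
        assume "\<not> cfree E' (B \<union> {a,b}) k"
        then obtain c1 c2 where "(\<forall>v\<in>B\<union>{a,b}. c1 v < k) \<and> prop_col E (B\<union>{a,b}) c1 \<and>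
            (\<forall>v\<in>A\<union>{a,b}. c2 v < k) \<and> prop_col E (A\<union>{a,b}) c2 \<and> c1 a = c1 b \<and> c2 a = c2 b"
          using half[OF bh IH k3 ab s' nab] unfolding E'_def by blast
        then show ?thesis by blast
      qed
    qed
  qed
  then obtain c1 c2 where c1: "\<forall>v\<in>A\<union>{a,b}. c1 v < k" "prop_col E (A\<union>{a,b}) c1"
    and c2: "\<forall>v\<in>B\<union>{a,b}. c2 v < k" "prop_col E (B\<union>{a,b}) c2" and eq: "(c1 a = c1 b) = (c2 a = c2 b)"
    by blast
  obtain \<pi> where p: "inj \<pi>" "\<pi> (c2 a) = c1 a" "\<pi> (c2 b) = c1 b" "\<forall>z<k. \<pi> z < k"
    using perm2[of "c1 a" k "c1 b" "c2 a" "c2 b"] c1(1) c2(1) eq by auto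
  show ?thesis
  proof (rule glue[OF _ _ c1(1) c1(2) c2(1) c2(2) p(1) p(4)])
    show "A \<union> {a, b} \<union> (B \<union> {a, b}) = V" using A(4) ab by auto
    show "\<forall>x\<in>A \<union> {a, b} - (B \<union> {a, b}). \<forall>y\<in>B \<union> {a, b} - (A \<union> {a, b}). \<not> E x y \<and> \<not> E y x"
    proof (intro ballI)
      fix x y assume "x \<in> A \<union> {a, b} - (B \<union> {a, b})" "y \<in> B \<union> {a, b} - (A \<union> {a, b})"
      then have "x \<in> A" "y \<in> B" by auto
      then show "\<not> E x y \<and> \<not> E y x" using A(5) sy by blast
    qed
    have "(A \<union> {a, b}) \<inter> (B \<union> {a, b}) = {a,b}" using A(3) by auto
    then show "\<forall>x\<in>(A \<union> {a, b}) \<inter> (B \<union> {a, b}). \<pi> (c2 x) = c1 x" using p(2,3) by auto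
  qed
qed

lemma case_conn3:
  fixes V :: "'a set"
  assumes bh: "bh k E V" and k3: "3 \<le> k" and reg: "\<forall>v\<in>V. card (nb E V v) = k"
    and ne: "V \<noteq> {}" and nosep: "\<forall>a\<in>V. \<forall>b\<in>V. \<forall>A B. \<not> sep E (V - {a,b}) A B"
  shows "kcol E V k"
proof -
  have fin: "finite V" and sy: "\<forall>u v. E u v \<longrightarrow> E v u" and ir: "\<forall>u. \<not> E u u"
    and cf: "cfree E V k"
    using bh by (auto simp: bh_def)
  obtain x where x: "x \<in> V" using ne by blast
  define N where "N = nb E V x"
  have cN: "card N = k" using reg x N_def by blast
  have finN: "finite N" using fin N_def by (simp add: nb_def)
  have NV: "N \<subseteq> V" unfolding N_def nb_def by blast
  have "\<not> (\<forall>y\<in>N. \<forall>z\<in>N. y \<noteq> z \<longrightarrow> E y z)"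
  proof
    assume cl: "\<forall>y\<in>N. \<forall>z\<in>N. y \<noteq> z \<longrightarrow> E y z"
    have xN: "x \<notin> N" using ir unfolding N_def nb_def by blast
    have "insert x N \<subseteq> V" using x NV by blast
    moreover have "card (insert x N) = Suc k" using xN finN cN by simp
    moreover have "\<forall>y\<in>insert x N. \<forall>z\<in>insert x N. y \<noteq> z \<longrightarrow> E y z"
    proof (intro ballI impI)
      fix y z assume "y \<in> insert x N" "z \<in> insert x N" "y \<noteq> z"
      moreover have "\<forall>u\<in>N. E x u \<and> E u x" using sy unfolding N_def nb_def by blast
      ultimately show "E y z" using cl by blast
    qed
    ultimately show False using cf unfolding cfree_def by blast
  qed
  then obtain y z where yz: "y \<in> N" "z \<in> N" "y \<noteq> z" "\<not> E y z" by blast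
  have yzV: "y \<in> V" "z \<in> V" "E x y" "E x z" using yz NV unfolding N_def nb_def by auto
  have xyz: "x \<noteq> y" "x \<noteq> z" using yzV ir by auto
  define V' where "V' = V - {y,z}"
  define L where "L = (\<lambda>w. {c. c < k \<and> (c = 0 \<longrightarrow> \<not> E w y \<and> \<not> E w z)})"
  have cL1: "card (L w) = k - 1" if "E w y \<or> E w z" for w
  proof -
    have "L w = {0<..<k}" using that unfolding L_def by auto
    then show ?thesis by simp
  qed
  have cL2: "card (L w) = k" if "\<not> E w y" "\<not> E w z" for w
  proof -
    have "L w = {..<k}" using that unfolding L_def by auto
    then show ?thesis by simp
  qed
  have finV': "finite V'" using fin unfolding V'_def by simp
  have claim: "\<forall>S\<subseteq>V'. S \<noteq> {} \<longrightarrow> (\<exists>w\<in>S. card (nb E S w) < card (L w))"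
  proof (intro allI impI)
    fix S assume S: "S \<subseteq> V'" "S \<noteq> {}"
    have finS: "finite S" using finV' S(1) by (rule finite_subset[rotated])
    show "\<exists>w\<in>S. card (nb E S w) < card (L w)"
    proof (cases "x \<in> S")
      case True
      have "nb E S x \<subseteq> N - {y,z}" using S(1) unfolding N_def nb_def V'_def by blast
      then have "card (nb E S x) \<le> card (N - {y,z})" using finN by (intro card_mono) auto
      also have "\<dots> = k - 2" using cN yz by (simp add: card_Diff_subset)
      finally have "card (nb E S x) < card (L x)" using cL1[of x] yzV k3 by simp
      then show ?thesis using True by blast
    next
      case False
      have ns: "\<not> sep E V' S (V' - S)" using nosep[rule_format, OF yzV(1) yzV(2)] unfolding V'_def by blast
      have xV: "x \<in> V' - S" using x xyz False unfolding V'_def by blast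
      have "\<exists>s\<in>S. \<exists>t\<in>V' - S. E s t"
      proof (rule ccontr)
        assume nn: "\<not> (\<exists>s\<in>S. \<exists>t\<in>V' - S. E s t)"
        have "sep E V' S (V' - S)" unfolding sep_def
        proof (intro conjI)
          show "S \<noteq> {}" by (rule S(2))
          show "V' - S \<noteq> {}" using xV by blast
          show "S \<inter> (V' - S) = {}" by blast
          show "S \<union> (V' - S) = V'" using S(1) by blast
          show "\<forall>a\<in>S. \<forall>b\<in>V' - S. \<not> E a b" using nn by blast
        qed
        then show False using ns by blast
      qed
      then obtain s t where st: "s \<in> S" "t \<in> V' - S" "E s t" by blast
      have sV: "s \<in> V" "t \<in> V" "t \<noteq> y" "t \<noteq> z" using st S(1) unfolding V'_def by auto
      have finNs: "finite (nb E V s)" using fin by (simp add: nb_def)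
      have dk: "card (nb E V s) = k" using reg sV by blast
      have tin: "t \<in> nb E V s" using st sV unfolding nb_def by blast
      have ns: "nb E S s \<subseteq> nb E V s - {t} - {y,z}" using S(1) st unfolding nb_def V'_def by auto
      show ?thesis
      proof (cases "E s y \<or> E s z")
        case True
        then obtain w where w: "w \<in> {y,z}" "E s w" by blast
        have win: "w \<in> nb E V s - {t}" using w sV yzV unfolding nb_def by auto
        have "nb E S s \<subseteq> nb E V s - {t} - {w}" using ns w by blast
        then have "card (nb E S s) \<le> card (nb E V s - {t} - {w})" using finNs by (intro card_mono) auto
        also have "\<dots> = k - 2" using win tin dk by simp
        finally have le: "card (nb E S s) \<le> k - 2" .
        have "card (L s) = k - 1" using cL1[of s] True by blast
        then have "card (nb E S s) < card (L s)" using le k3 by linarith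
        then show ?thesis using st(1) by blast
      next
        case False
        have "card (nb E S s) \<le> card (nb E V s - {t})" using ns finNs by (intro card_mono) auto
        also have "\<dots> = k - 1" using tin dk by simp
        finally have le: "card (nb E S s) \<le> k - 1" .
        have "card (L s) = k" using cL2[of s] False by blast
        then have "card (nb E S s) < card (L s)" using le k3 by linarith
        then show ?thesis using st(1) by blast
      qed
    qed
  qed
  obtain c where c: "\<forall>v\<in>V'. c v \<in> L v" "prop_col E V' c"
    using list_col[OF finV' sy ir claim] by blast
  define c' where "c' = c(y := 0, z := 0)"
  have "\<forall>v\<in>V. c' v < k"
  proof
    fix v assume "v \<in> V"
    then show "c' v < k" using c(1) k3 unfolding c'_def L_def V'_def by auto
  qed
  moreover have "prop_col E V c'"
    unfolding prop_col_def
  proof (intro ballI impI)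
    fix u v assume uv: "u \<in> V" "v \<in> V" "E u v"
    have Ezy: "\<not> E z y" using yz sy by blast
    show "c' u \<noteq> c' v"
    proof (cases "u \<in> {y,z}")
      case True
      then have "v \<notin> {y,z}" using uv yz Ezy ir by blast
      then have vV: "v \<in> V'" using uv unfolding V'_def by blast
      have "E v u" using uv sy by blast
      then have "c v \<noteq> 0" using c(1) vV True unfolding L_def by auto
      then show ?thesis using True \<open>v \<notin> {y,z}\<close> unfolding c'_def by auto
    next
      case uF: False
      then have uV: "u \<in> V'" using uv unfolding V'_def by blast
      show ?thesis
      proof (cases "v \<in> {y,z}")
        case True
        then have "c u \<noteq> 0" using c(1) uV uv unfolding L_def by auto
        then show ?thesis using True uF unfolding c'_def by auto
      next
        case False
        then have "v \<in> V'" using uv unfolding V'_def by blast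
        then show ?thesis using c(2) uV uv uF False unfolding prop_col_def c'_def by auto
      qed
    qed
  qed
  ultimately show ?thesis unfolding kcol_def by blast
qed

lemma brooks:
  fixes V :: "'a set"
  assumes "3 \<le> k" "bh k E V"
  shows "kcol E V k"
  using assms(2)
proof (induction "card V" arbitrary: V E rule: less_induct)
  case less
  have IH: "\<forall>(W::'a set) E'. card W < card V \<longrightarrow> bh k E' W \<longrightarrow> kcol E' W k"
    using less.hyps by blast
  have bh: "bh k E V" by fact
  show ?case
  proof (cases "V = {}")
    case True then show ?thesis by (simp add: kcol_def prop_col_def)
  next
    case ne: False
    show ?thesis
    proof (cases "\<exists>v\<in>V. card (nb E V v) < k")
      case True
      then obtain v where "v \<in> V" "card (nb E V v) < k" by blast
      then show ?thesis using case_low[OF bh IH] by blast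
    next
      case nlow: False
      have reg: "\<forall>v\<in>V. card (nb E V v) = k" using nlow bh unfolding bh_def by force
      show ?thesis
      proof (cases "\<exists>v\<in>V. \<exists>A B. sep E (V - {v}) A B")
        case True
        then obtain v A B where "v \<in> V" "sep E (V - {v}) A B" by blast
        then show ?thesis using case_cut1[OF bh IH] by blast
      next
        case nocut: False
        show ?thesis
        proof (cases "\<exists>a\<in>V. \<exists>b\<in>V. a \<noteq> b \<and> (\<exists>A B. sep E (V - {a,b}) A B)")
          case True
          then obtain a b A B where "a \<in> V" "b \<in> V" "a \<noteq> b" "sep E (V - {a,b}) A B" by blast
          moreover have "\<forall>v\<in>V. \<forall>A B. \<not> sep E (V - {v}) A B" using nocut by blast
          ultimately show ?thesis using case_cut2[OF bh IH assms(1)] by blast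
        next
          case False
          have "\<forall>a\<in>V. \<forall>b\<in>V. \<forall>A B. \<not> sep E (V - {a,b}) A B"
          proof (intro ballI allI)
            fix a b A B assume "a \<in> V" "b \<in> V"
            show "\<not> sep E (V - {a,b}) A B"
            proof (cases "a = b")
              case True then show ?thesis using nocut \<open>a \<in> V\<close> by simp
            next
              case False then show ?thesis using \<open>a \<in> V\<close> \<open>b \<in> V\<close> \<open>\<not> (\<exists>a\<in>V. \<exists>b\<in>V. a \<noteq> b \<and> (\<exists>A B. sep E (V - {a,b}) A B))\<close> by blast
            qed
          qed
          then show ?thesis using case_conn3[OF bh assms(1) reg ne] by blast
        qed
      qed
    qed
  qed
qed



lemma parity_symdiff:
  assumes "finite A" "finite B"
  shows "odd (card ((A - B) \<union> (B - A))) \<longleftrightarrow> (odd (card A) \<noteq> odd (card B))"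
proof -
  have "card ((A - B) \<union> (A \<inter> B)) = card (A - B) + card (A \<inter> B)"
    using assms by (intro card_Un_disjoint) auto
  then have "card A = card (A - B) + card (A \<inter> B)" by (simp add: Un_Diff_Int)
  moreover have "card ((B - A) \<union> (B \<inter> A)) = card (B - A) + card (B \<inter> A)"
    using assms by (intro card_Un_disjoint) auto
  then have "card B = card (B - A) + card (A \<inter> B)" by (metis Un_Diff_Int Int_commute)
  moreover have "card ((A - B) \<union> (B - A)) = card (A - B) + card (B - A)"
    using assms by (intro card_Un_disjoint) auto
  ultimately show ?thesis by presburger
qed

lemma rowsum_single: "gf2_rowsum X {k} = X k"
proof
  fix j
  have "{k'\<in>{k}. X k' j} = (if X k j then {k} else {})" by auto
  then show "gf2_rowsum X {k} j = X k j" by (simp add: gf2_rowsum_def)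
qed

lemma rowsum_add:
  assumes "finite T" "finite T'"
  shows "gf2_add (gf2_rowsum X T) (gf2_rowsum X T') = gf2_rowsum X ((T - T') \<union> (T' - T))"
proof
  fix j
  have "{k \<in> (T - T') \<union> (T' - T). X k j} = ({k\<in>T. X k j} - {k\<in>T'. X k j}) \<union> ({k\<in>T'. X k j} - {k\<in>T. X k j})"
    by auto
  then show "gf2_add (gf2_rowsum X T) (gf2_rowsum X T') j = gf2_rowsum X ((T - T') \<union> (T' - T)) j"
    unfolding gf2_add_def gf2_rowsum_def using parity_symdiff[of "{k\<in>T. X k j}" "{k\<in>T'. X k j}"] assms
    by simp
qed

lemma contrast_flip:
  assumes "finite S" "odd (card {j\<in>S. r j})"
  shows "contrast S (gf2_add x r) = - contrast S x"
proof -
  have "{j\<in>S. gf2_add x r j} = ({j\<in>S. x j} - {j\<in>S. r j}) \<union> ({j\<in>S. r j} - {j\<in>S. x j})"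
    unfolding gf2_add_def by auto
  then have "odd (card {j\<in>S. gf2_add x r j}) \<longleftrightarrow> even (card {j\<in>S. x j})"
    using parity_symdiff[of "{j\<in>S. x j}" "{j\<in>S. r j}"] assms by simp
  then show ?thesis unfolding contrast_def by (simp add: minus_one_power_iff)
qed

lemma estim:
  assumes "finite S" "T0 \<subseteq> {..<q}" "odd (card {j\<in>S. gf2_rowsum X T0 j})"
  shows "estimable n q X S"
  unfolding estimable_def
proof
  fix B assume "B \<in> blocks n q X"
  then obtain a where B: "B = gf2_add a ` gf2_rowspace q X" unfolding blocks_def by blast
  define r0 where "r0 = gf2_rowsum X T0"
  define \<phi> where "\<phi> = (\<lambda>x. gf2_add x r0)"
  have inv: "\<phi> (\<phi> x) = x" for x unfolding \<phi>_def gf2_add_def by auto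
  have cl: "\<phi> x \<in> B" if "x \<in> B" for x
  proof -
    from that obtain T where T: "T \<subseteq> {..<q}" "x = gf2_add a (gf2_rowsum X T)"
      unfolding B gf2_rowspace_def by blast
    have fT: "finite T" "finite T0" using finite_subset[OF T(1)] finite_subset[OF assms(2)] by auto
    have "\<phi> x = gf2_add a (gf2_add (gf2_rowsum X T) r0)"
      unfolding \<phi>_def T(2) gf2_add_def by auto
    also have "\<dots> = gf2_add a (gf2_rowsum X ((T - T0) \<union> (T0 - T)))"
      unfolding r0_def using rowsum_add[OF fT] by simp
    finally show ?thesis unfolding B gf2_rowspace_def using T(1) assms(2) by blast
  qed
  have "(\<Sum>x\<in>B. contrast S (\<phi> x)) = (\<Sum>x\<in>B. contrast S x)"
    by (rule sum.reindex_bij_witness[of B \<phi> \<phi>]) (use inv cl in auto)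
  moreover have "(\<Sum>x\<in>B. contrast S (\<phi> x)) = - (\<Sum>x\<in>B. contrast S x)"
    unfolding \<phi>_def r0_def using contrast_flip[OF assms(1) assms(3)] by (simp add: sum_negf)
  ultimately show "(\<Sum>x\<in>B. contrast S x) = 0" by linarith
qed

lemma bits_differ:
  fixes a b :: nat
  shows "a < 2^q \<Longrightarrow> b < 2^q \<Longrightarrow> a \<noteq> b \<Longrightarrow> \<exists>k<q. odd (a div 2^k) \<noteq> odd (b div 2^k)"
proof (induction q arbitrary: a b)
  case 0 then show ?case by simp
next
  case (Suc q)
  show ?case
  proof (cases "odd a = odd b")
    case False then show ?thesis by (intro exI[of _ 0]) simp
  next
    case True
    have "a div 2 \<noteq> b div 2" using True Suc.prems(3) by presburger
    moreover have "a div 2 < 2^q" "b div 2 < 2^q" using Suc.prems by auto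
    ultimately obtain k where "k < q" "odd (a div 2 div 2^k) \<noteq> odd (b div 2 div 2^k)"
      using Suc.IH by blast
    then show ?thesis by (intro exI[of _ "Suc k"]) (simp add: div_mult2_eq)
  qed
qed

lemma pow_bit: "odd ((2::nat)^k div 2^l) \<longleftrightarrow> k = l"
proof (cases "l \<le> k")
  case True
  then have "(2::nat)^k div 2^l = 2^(k-l)" by (simp add: power_diff)
  then show ?thesis using True by auto
next
  case False
  then have "(2::nat)^k div 2^l = 0" by (simp add: div_less)
  then show ?thesis using False by auto
qed

lemma matrix_from_m:
  fixes m :: "nat \<Rightarrow> nat" and I :: "nat set set"
  assumes m: "\<forall>j<n. 0 < m j \<and> m j < 2^q" and basis: "\<forall>k<q. \<exists>j<n. m j = 2^k"
    and edges: "\<forall>e\<in>I. \<exists>i j. i < n \<and> j < n \<and> i \<noteq> j \<and> e = {i,j} \<and> m i \<noteq> m j"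
  shows "\<exists>X. gen_matrix q n X \<and> (\<forall>i<n. estimable n q X {i}) \<and> (\<forall>e\<in>I. estimable n q X e)"
proof -
  define X where "X = (\<lambda>k j. j < n \<and> odd (m j div 2^k))"
  have "gen_matrix q n X"
    unfolding gen_matrix_def
  proof (intro conjI allI impI)
    fix k assume "k < q"
    show "X k \<in> gf2_vecs n" unfolding gf2_vecs_def X_def by simp
  next
    fix T assume T: "T \<subseteq> {..<q} \<and> T \<noteq> {}"
    then obtain k where k: "k \<in> T" by blast
    then have "k < q" using T by blast
    then obtain j where j: "j < n" "m j = 2^k" using basis by blast
    have "{k'\<in>T. X k' j} = {k}" using k j unfolding X_def by (auto simp: pow_bit)
    then have "gf2_rowsum X T j" unfolding gf2_rowsum_def by simp
    then show "gf2_rowsum X T \<noteq> (\<lambda>_. False)" by auto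
  qed
  moreover have "\<forall>i<n. estimable n q X {i}"
  proof (intro allI impI)
    fix i assume i: "i < n"
    have h: "m i \<noteq> 0" "m i < 2^q" "(0::nat) < 2^q" using m i by auto
    obtain k where k: "k < q" "odd (m i div 2^k) \<noteq> odd ((0::nat) div 2^k)"
      using bits_differ[OF h(2) h(3) h(1)] by blast
    have "X k i" using k(2) i unfolding X_def by simp
    then have "{j\<in>{i}. gf2_rowsum X {k} j} = {i}" unfolding rowsum_single by auto
    then have "odd (card {j\<in>{i}. gf2_rowsum X {k} j})" by simp
    moreover have "{k} \<subseteq> {..<q}" using k(1) by simp
    ultimately show "estimable n q X {i}" by (intro estim[of "{i}" "{k}"]) auto
  qed
  moreover have "\<forall>e\<in>I. estimable n q X e"
  proof
    fix e assume "e \<in> I"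
    then obtain i j where ij: "i < n" "j < n" "i \<noteq> j" "e = {i,j}" "m i \<noteq> m j" using edges by blast
    have h: "m i < 2^q" "m j < 2^q" using m ij(1,2) by auto
    obtain k where k: "k < q" "odd (m i div 2^k) \<noteq> odd (m j div 2^k)"
      using bits_differ[OF h(1) h(2) ij(5)] by (elim exE conjE) blast
    have "card {l\<in>{i,j}. gf2_rowsum X {k} l} = 1"
    proof (cases "odd (m i div 2^k)")
      case True
      then have "X k i" "\<not> X k j" using k ij unfolding X_def by auto
      then have "{l\<in>{i,j}. gf2_rowsum X {k} l} = {i}" unfolding rowsum_single by auto
      then show ?thesis by simp
    next
      case False
      then have "\<not> X k i" "X k j" using k ij unfolding X_def by auto
      then have "{l\<in>{i,j}. gf2_rowsum X {k} l} = {j}" unfolding rowsum_single by auto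
      then show ?thesis by simp
    qed
    then have "odd (card {l\<in>e. gf2_rowsum X {k} l})" using ij(4) by simp
    moreover have "{k} \<subseteq> {..<q}" using k(1) by simp
    ultimately show "estimable n q X e" using ij(4) by (intro estim[of e "{k}"]) auto
  qed
  ultimately show ?thesis by blast
qed



lemma more_colors:
  fixes c0 :: "'a \<Rightarrow> nat"
  assumes c0: "\<forall>v\<in>V. c0 v < K" "prop_col E V c0" and fin: "finite V" and qV: "q \<le> card V"
    and qK: "q \<le> K" and ir: "\<forall>u. \<not> E u u"
  shows "\<exists>c. (\<forall>v\<in>V. c v < K) \<and> prop_col E V c \<and> q \<le> card (c ` V)"
proof -
  have "\<forall>m\<le>q. \<exists>c. (\<forall>v\<in>V. c v < K) \<and> prop_col E V c \<and> m \<le> card (c ` V)"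
  proof (intro allI impI)
    fix m show "m \<le> q \<Longrightarrow> \<exists>c. (\<forall>v\<in>V. c v < K) \<and> prop_col E V c \<and> m \<le> card (c ` V)"
    proof (induction m)
      case 0 then show ?case using c0 by blast
    next
      case (Suc m)
      then obtain c where c: "\<forall>v\<in>V. c v < K" "prop_col E V c" "m \<le> card (c ` V)" by auto
      show ?case
      proof (cases "Suc m \<le> card (c ` V)")
        case True then show ?thesis using c by blast
      next
        case False
        then have cm: "card (c ` V) = m" using c(3) by simp
        have "\<not> inj_on c V"
        proof
          assume "inj_on c V"
          then have "card (c ` V) = card V" by (rule card_image)
          then show False using cm Suc.prems qV by linarith
        qed
        then obtain u w where uw: "u \<in> V" "w \<in> V" "u \<noteq> w" "c u = c w" unfolding inj_on_def by blast
        have sub: "c ` V \<subseteq> {..<K}" using c(1) by auto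
        have "\<not> {..<K} \<subseteq> c ` V"
        proof
          assume "{..<K} \<subseteq> c ` V"
          then have "card {..<K} \<le> card (c ` V)" using fin by (intro card_mono) auto
          then show False using cm Suc.prems qK by simp
        qed
        then obtain g where g: "g < K" "g \<notin> c ` V" by blast
        define c' where "c' = c(u := g)"
        have "\<forall>v\<in>V. c' v < K" using c(1) g(1) by (simp add: c'_def)
        moreover have "prop_col E V c'"
          unfolding prop_col_def
        proof (intro ballI impI)
          fix x y assume xy: "x \<in> V" "y \<in> V" "E x y"
          have "x \<noteq> y" using xy ir by blast
          show "c' x \<noteq> c' y"
          proof (cases "x = u")
            case True
            then have e: "c' y = c y" "c' x = g" using \<open>x \<noteq> y\<close> by (auto simp: c'_def)
            have "c y \<in> c ` V" using xy(2) by blast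
            then show ?thesis using e g(2) by metis
          next
            case False
            show ?thesis
            proof (cases "y = u")
              case True
              then have e: "c' x = c x" "c' y = g" using \<open>x \<noteq> u\<close> by (auto simp: c'_def)
              have "c x \<in> c ` V" using xy(1) by blast
              then show ?thesis using e g(2) by metis
            next
              case False2: False
              then show ?thesis using False xy c(2) by (auto simp: c'_def prop_col_def)
            qed
          qed
        qed
        moreover have "Suc m \<le> card (c' ` V)"
        proof -
          have "insert g (c ` V) \<subseteq> c' ` V"
          proof
            fix z assume "z \<in> insert g (c ` V)"
            then show "z \<in> c' ` V"
            proof
              assume "z = g" then show ?thesis using uw(1) by (simp add: c'_def)
            next
              assume "z \<in> c ` V"
              then obtain x where x: "x \<in> V" "z = c x" by blast
              show ?thesis
              proof (cases "x = u")
                case True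
                then have "c' w = z" using uw x by (simp add: c'_def)
                then show ?thesis using uw(2) by blast
              next
                case False
                then have "c' x = z" using x by (simp add: c'_def)
                then show ?thesis using x(1) by blast
              qed
            qed
          qed
          then have "card (insert g (c ` V)) \<le> card (c' ` V)" using fin by (intro card_mono) auto
          moreover have "card (insert g (c ` V)) = Suc m" using g(2) cm fin by simp
          ultimately show ?thesis by simp
        qed
        ultimately show ?thesis by blast
      qed
    qed
  qed
  then show ?thesis by blast
qed

lemma map_colors:
  fixes C :: "nat set"
  assumes C: "C \<subseteq> {..<K}" "q \<le> card C" and K: "K = 2^q - 1"
  shows "\<exists>g. inj_on g {..<K} \<and> g ` {..<K} \<subseteq> {1..<2^q} \<and> (\<forall>k<q. (2::nat)^k \<in> g ` C)"
proof -
  obtain U0 where U0: "U0 \<subseteq> C" "card U0 = q" "finite U0" using obtain_subset_with_card_n[OF C(2)] by blast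
  define P where "P = (\<lambda>k. (2::nat)^k) ` {..<q}"
  have injp: "inj_on (\<lambda>k. (2::nat)^k) {..<q}" by (intro inj_onI) simp
  have cP: "card P = q" unfolding P_def using card_image[OF injp] by simp
  have PS: "P \<subseteq> {1..<2^q}" unfolding P_def by (auto intro: power_strict_increasing)
  have finP: "finite P" unfolding P_def by simp
  obtain h0 where h0: "bij_betw h0 U0 P" using finite_same_card_bij[OF U0(3) finP] cP U0(2) by auto
  have U0K: "U0 \<subseteq> {..<K}" using U0(1) C(1) by blast
  have c1: "card ({..<K} - U0) = K - q" using card_Diff_subset[OF U0(3) U0K] U0(2) by simp
  have c2: "card ({1..<2^q} - P) = K - q" using card_Diff_subset[OF _ PS] cP K by (simp add: P_def)
  obtain h1 where h1: "bij_betw h1 ({..<K} - U0) ({1..<2^q} - P)"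
    using finite_same_card_bij[of "{..<K} - U0" "{1..<2^q} - P"] c1 c2 by auto
  define g where "g = (\<lambda>x. if x \<in> U0 then h0 x else h1 x)"
  have "inj_on g {..<K}"
  proof (rule inj_onI)
    fix x y assume xy: "x \<in> {..<K}" "y \<in> {..<K}" "g x = g y"
    show "x = y"
    proof (cases "x \<in> U0")
      case True
      show ?thesis
      proof (cases "y \<in> U0")
        case True
        then show ?thesis using \<open>x \<in> U0\<close> xy h0 unfolding g_def bij_betw_def inj_on_def by auto
      next
        case False
        then have "h1 y \<notin> P" using h1 xy(2) unfolding bij_betw_def by blast
        moreover have "h0 x \<in> P" using h0 \<open>x \<in> U0\<close> unfolding bij_betw_def by blast
        ultimately show ?thesis using xy(3) \<open>x \<in> U0\<close> False unfolding g_def by auto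
      qed
    next
      case xF: False
      show ?thesis
      proof (cases "y \<in> U0")
        case True
        then have "h0 y \<in> P" using h0 unfolding bij_betw_def by blast
        moreover have "h1 x \<notin> P" using h1 xy(1) xF unfolding bij_betw_def by blast
        ultimately show ?thesis using xy(3) True xF unfolding g_def by auto
      next
        case False
        then show ?thesis using xF xy h1 unfolding g_def bij_betw_def inj_on_def by auto
      qed
    qed
  qed
  moreover have "g ` {..<K} \<subseteq> {1..<2^q}"
  proof
    fix z assume "z \<in> g ` {..<K}"
    then obtain x where x: "x < K" "z = g x" by blast
    show "z \<in> {1..<2^q}"
    proof (cases "x \<in> U0")
      case True
      then have "h0 x \<in> P" using h0 unfolding bij_betw_def by blast
      then show ?thesis using PS x True unfolding g_def by auto
    next
      case False
      then have "h1 x \<in> {1..<2^q} - P" using h1 x(1) unfolding bij_betw_def by blast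
      then show ?thesis using x False unfolding g_def by auto
    qed
  qed
  moreover have "\<forall>k<q. (2::nat)^k \<in> g ` C"
  proof (intro allI impI)
    fix k assume "k < q"
    then have "(2::nat)^k \<in> P" unfolding P_def by blast
    then have "(2::nat)^k \<in> h0 ` U0" using h0 unfolding bij_betw_def by simp
    then obtain x where "x \<in> U0" "h0 x = (2::nat)^k" by (metis imageE)
    then have "g x = (2::nat)^k" "x \<in> C" using U0(1) unfolding g_def by auto
    then show "(2::nat)^k \<in> g ` C" by (metis imageI)
  qed
  ultimately show ?thesis by blast
qed

lemma case_ii:
  fixes E :: "'a \<Rightarrow> 'a \<Rightarrow> bool"
  assumes fin: "finite V" and sy: "\<forall>u v. E u v \<longrightarrow> E v u" and ir: "\<forall>u. \<not> E u u"
    and HV: "H \<subseteq> V" and cH: "card H \<le> K" and low: "\<forall>w\<in>V - H. card (nb E V w) < K"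
  shows "kcol E V K"
proof -
  have finH: "finite H" using fin HV by (rule finite_subset[rotated])
  obtain f where f: "f ` H \<subseteq> {..<K}" "inj_on f H"
    using card_le_inj[OF finH, of "{..<K}"] cH by auto
  define V' where "V' = V - H"
  define L where "L = (\<lambda>w. {..<K} - f ` nb E H w)"
  have claim: "\<forall>S\<subseteq>V'. S \<noteq> {} \<longrightarrow> (\<exists>w\<in>S. card (nb E S w) < card (L w))"
  proof (intro allI impI)
    fix S assume S: "S \<subseteq> V'" "S \<noteq> {}"
    then obtain w where w: "w \<in> S" by blast
    have wV: "w \<in> V - H" using w S(1) unfolding V'_def by blast
    have finN: "finite (nb E V w)" using fin by (simp add: nb_def)
    have "nb E S w \<union> nb E H w \<subseteq> nb E V w" using S(1) HV unfolding V'_def nb_def by blast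
    then have "card (nb E S w \<union> nb E H w) \<le> card (nb E V w)" using finN by (intro card_mono)
    moreover have "card (nb E S w \<union> nb E H w) = card (nb E S w) + card (nb E H w)"
    proof (rule card_Un_disjoint)
      show "finite (nb E S w)" using finite_subset[OF S(1)] fin unfolding V'_def nb_def by simp
      show "finite (nb E H w)" using finH unfolding nb_def by simp
      show "nb E S w \<inter> nb E H w = {}" using S(1) unfolding V'_def nb_def by blast
    qed
    moreover have "card (L w) = K - card (nb E H w)"
    proof -
      have sub: "f ` nb E H w \<subseteq> {..<K}" using f(1) unfolding nb_def by blast
      have inj: "inj_on f (nb E H w)" using f(2) unfolding nb_def by (rule inj_on_subset) blast
      have "card (L w) = K - card (f ` nb E H w)"
        unfolding L_def using card_Diff_subset[OF _ sub] finH by (simp add: nb_def)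
      then show ?thesis using card_image[OF inj] by simp
    qed
    moreover have "card (nb E V w) < K" using low wV by blast
    ultimately have "card (nb E S w) < card (L w)" by linarith
    then show "\<exists>w\<in>S. card (nb E S w) < card (L w)" using w by blast
  qed
  have finV': "finite V'" using fin unfolding V'_def by simp
  obtain c where c: "\<forall>v\<in>V'. c v \<in> L v" "prop_col E V' c"
    using list_col[OF finV' sy ir claim] by blast
  define col where "col = (\<lambda>v. if v \<in> H then f v else c v)"
  have "\<forall>v\<in>V. col v < K"
  proof
    fix v assume "v \<in> V"
    then show "col v < K" using f(1) c(1) unfolding col_def V'_def L_def by auto
  qed
  moreover have "prop_col E V col"
    unfolding prop_col_def
  proof (intro ballI impI)
    fix u v assume uv: "u \<in> V" "v \<in> V" "E u v"
    show "col u \<noteq> col v"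
    proof (cases "u \<in> H")
      case uH: True
      show ?thesis
      proof (cases "v \<in> H")
        case True
        have "u \<noteq> v" using uv ir by blast
        then show ?thesis using f(2) uH True unfolding col_def inj_on_def by auto
      next
        case False
        have "v \<in> V'" using uv False unfolding V'_def by blast
        then have "c v \<notin> f ` nb E H v" using c(1) unfolding L_def by blast
        moreover have "u \<in> nb E H v" using uH uv sy unfolding nb_def by blast
        ultimately have "f u \<noteq> c v" by (metis imageI)
        then show ?thesis using uH False unfolding col_def by auto
      qed
    next
      case uH: False
      have uV': "u \<in> V'" using uv uH unfolding V'_def by blast
      show ?thesis
      proof (cases "v \<in> H")
        case True
        have "c u \<notin> f ` nb E H u" using c(1) uV' unfolding L_def by blast
        moreover have "v \<in> nb E H u" using True uv unfolding nb_def by blast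
        ultimately have "c u \<noteq> f v" by (metis imageI)
        then show ?thesis using uH True unfolding col_def by auto
      next
        case False
        have "v \<in> V'" using uv False unfolding V'_def by blast
        then show ?thesis using c(2) uV' uv uH False unfolding col_def prop_col_def by auto
      qed
    qed
  qed
  ultimately show ?thesis unfolding kcol_def by blast
qed

lemma deg_le:
  fixes I :: "nat set set"
  assumes "finite I"
  shows "card (nb (\<lambda>a b. {a,b} \<in> I) V i) \<le> deg I i"
  unfolding deg_def
proof (rule card_inj_on_le[of "\<lambda>u. {i,u}"])
  show "inj_on (\<lambda>u. {i, u}) (nb (\<lambda>a b. {a, b} \<in> I) V i)"
    by (intro inj_onI) (auto simp: doubleton_eq_iff)
  show "(\<lambda>u. {i, u}) ` nb (\<lambda>a b. {a, b} \<in> I) V i \<subseteq> {e \<in> I. i \<in> e}"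
    unfolding nb_def by auto
  show "finite {e \<in> I. i \<in> e}" using assms by simp
qed

theorem theorem3:
  fixes n q :: nat and I :: "nat set set"
  assumes "1 \<le> q" and "q \<le> n"
    and I_pairs: "\<forall>e\<in>I. \<exists>i j. i < n \<and> j < n \<and> i \<noteq> j \<and> e = {i, j}"
    and cond: "((\<forall>i<n. deg I i \<le> 2 ^ q - 1) \<and>
               \<not> (\<exists>F. F \<subseteq> {..<n} \<and> card F = 2 ^ q \<and>
                     (\<forall>a\<in>F. \<forall>b\<in>F. a \<noteq> b \<longrightarrow> {a, b} \<in> I)))
            \<or> card {i. i < n \<and> deg I i \<ge> 2 ^ q - 1} \<le> 2 ^ q - 1"
  shows "\<exists>X. gen_matrix q n X \<and> (\<forall>i<n. estimable n q X {i}) \<and> (\<forall>e\<in>I. estimable n q X e)"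
proof -
  define E where "E = (\<lambda>a b. {a,b} \<in> I)"
  define K where "K = (2::nat)^q - 1"
  define V where "V = {..<n::nat}"
  have finV: "finite V" unfolding V_def by simp
  have "I \<subseteq> Pow {..<n}" using I_pairs by auto
  then have finI: "finite I" by (rule finite_subset) simp
  have sy: "\<forall>u v. E u v \<longrightarrow> E v u" unfolding E_def by (simp add: insert_commute)
  have ir: "\<forall>u. \<not> E u u"
  proof
    fix u show "\<not> E u u"
    proof
      assume "E u u"
      then have "{u} \<in> I" unfolding E_def by simp
      then obtain i j where "i \<noteq> j" "{u} = {i,j}" using I_pairs by blast
      then show False by (metis doubleton_eq_iff insert_absorb2)
    qed
  qed
  have dg: "card (nb E V i) \<le> deg I i" for i unfolding E_def by (rule deg_le[OF finI])
  have q2: "q < 2^q" by (rule less_exp)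
  have Kq: "q \<le> K" unfolding K_def using q2 by linarith
  have K1: "Suc K = 2^q" unfolding K_def by simp
  have col: "kcol E V K"
  proof (cases "(\<forall>i<n. deg I i \<le> 2 ^ q - 1) \<and>
               \<not> (\<exists>F. F \<subseteq> {..<n} \<and> card F = 2 ^ q \<and> (\<forall>a\<in>F. \<forall>b\<in>F. a \<noteq> b \<longrightarrow> {a, b} \<in> I))")
    case True
    note T = this
    show ?thesis
    proof (cases "q = 1")
      case True
      have "I = {}"
      proof (rule ccontr)
        assume "I \<noteq> {}"
        then obtain e where "e \<in> I" by blast
        then obtain i j where ij: "i < n" "j < n" "i \<noteq> j" "e = {i,j}" using I_pairs by blast
        have "{i,j} \<subseteq> {..<n}" "card {i,j} = 2 ^ q" using ij True by auto
        moreover have "\<forall>a\<in>{i,j}. \<forall>b\<in>{i,j}. a \<noteq> b \<longrightarrow> {a, b} \<in> I"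
          using ij \<open>e \<in> I\<close> by (auto simp: insert_commute)
        ultimately show False using T by blast
      qed
      then have "\<forall>v\<in>V. (\<lambda>_. 0::nat) v < K" "prop_col E V (\<lambda>_. 0)"
        using Kq \<open>1 \<le> q\<close> unfolding prop_col_def E_def by auto
      then show ?thesis unfolding kcol_def by (intro exI[of _ "\<lambda>_. 0"]) simp
    next
      case False
      then have "2 \<le> q" using \<open>1 \<le> q\<close> by simp
      then have "(2::nat)^2 \<le> 2^q" by (rule power_increasing) simp
      then have K3: "3 \<le> K" unfolding K_def by simp
      have "bh K E V"
        unfolding bh_def
      proof (intro conjI)
        show "finite V" by (rule finV)
        show "\<forall>u v. E u v \<longrightarrow> E v u" by (rule sy)
        show "\<forall>u. \<not> E u u" by (rule ir)
        show "\<forall>v\<in>V. card (nb E V v) \<le> K"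
          using T dg unfolding V_def K_def by (meson le_trans lessThan_iff)
        show "cfree E V K"
          unfolding cfree_def
        proof
          assume "\<exists>F\<subseteq>V. card F = Suc K \<and> (\<forall>a\<in>F. \<forall>b\<in>F. a \<noteq> b \<longrightarrow> E a b)"
          then obtain F where "F \<subseteq> {..<n}" "card F = 2^q" "\<forall>a\<in>F. \<forall>b\<in>F. a \<noteq> b \<longrightarrow> {a,b} \<in> I"
            unfolding V_def E_def K1 by blast
          then show False using T by blast
        qed
      qed
      then show ?thesis by (rule brooks[OF K3])
    qed
  next
    case False
    then have cH: "card {i. i < n \<and> deg I i \<ge> 2 ^ q - 1} \<le> K" using cond unfolding K_def by blast
    show ?thesis
    proof (rule case_ii[OF finV sy ir _ cH])
      show "{i. i < n \<and> 2 ^ q - 1 \<le> deg I i} \<subseteq> V" unfolding V_def by auto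
      show "\<forall>w\<in>V - {i. i < n \<and> 2 ^ q - 1 \<le> deg I i}. card (nb E V w) < K"
      proof
        fix w assume "w \<in> V - {i. i < n \<and> 2 ^ q - 1 \<le> deg I i}"
        then have "deg I w < K" unfolding V_def K_def by auto
        then show "card (nb E V w) < K" using dg[of w] by linarith
      qed
    qed
  qed
  then obtain c0 where c0: "\<forall>v\<in>V. c0 v < K" "prop_col E V c0" unfolding kcol_def by blast
  have "q \<le> card V" unfolding V_def using \<open>q \<le> n\<close> by simp
  then obtain c where c: "\<forall>v\<in>V. c v < K" "prop_col E V c" "q \<le> card (c ` V)"
    using more_colors[OF c0 finV _ Kq ir] by blast
  have "c ` V \<subseteq> {..<K}" using c(1) by auto
  then obtain g where g: "inj_on g {..<K}" "g ` {..<K} \<subseteq> {1..<2^q}" "\<forall>k<q. (2::nat)^k \<in> g ` (c ` V)"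
    using map_colors[OF _ c(3) K_def] by blast
  define m where "m = (\<lambda>j. g (c j))"
  show ?thesis
  proof (rule matrix_from_m[of n m q I])
    show "\<forall>j<n. 0 < m j \<and> m j < 2 ^ q"
    proof (intro allI impI)
      fix j assume "j < n"
      then have "c j \<in> {..<K}" using c(1) unfolding V_def by auto
      then have "g (c j) \<in> {1..<2^q}" using g(2) by blast
      then show "0 < m j \<and> m j < 2 ^ q" unfolding m_def by auto
    qed
    show "\<forall>k<q. \<exists>j<n. m j = 2 ^ k"
    proof (intro allI impI)
      fix k assume "k < q"
      then have "(2::nat)^k \<in> g ` (c ` V)" using g(3) by blast
      then obtain j where "j \<in> V" "(2::nat)^k = g (c j)" by blast
      then show "\<exists>j<n. m j = 2 ^ k" unfolding m_def V_def by auto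
    qed
    show "\<forall>e\<in>I. \<exists>i j. i < n \<and> j < n \<and> i \<noteq> j \<and> e = {i, j} \<and> m i \<noteq> m j"
    proof
      fix e assume "e \<in> I"
      then obtain i j where ij: "i < n" "j < n" "i \<noteq> j" "e = {i,j}" using I_pairs by blast
      then have "E i j" using \<open>e \<in> I\<close> unfolding E_def by simp
      then have "c i \<noteq> c j" using c(2) ij unfolding prop_col_def V_def by auto
      moreover have "c i \<in> {..<K}" "c j \<in> {..<K}" using c(1) ij unfolding V_def by auto
      ultimately have "m i \<noteq> m j" using g(1) unfolding m_def inj_on_def by blast
      then show "\<exists>i j. i < n \<and> j < n \<and> i \<noteq> j \<and> e = {i, j} \<and> m i \<noteq> m j" using ij by blast
    qed
  qed
qed


end
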